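(* Let $u^1_{2n}$ denote the coefficient of $a^2$ in the Taylor expansion $u_{2n}(a)=u^0_{2n}+u^1_{2n}a^2+u^2_{2n}a^4+O(a^6)$ at $a=0$. Then $$u^1_2=-1,\qquad u^1_4=-\frac{15}{16},\qquad u^1_{2n}=-\frac{61}{12^2}\,\frac{(n+1)^2}{2^n}\quad(n\ge3).$$
   Context: The rational functions $u_{2n}(a)$ (which depend on $a$ only through $a^2$) are defined by $(a^2+1)u_2=1$ and, for $n\ge2$, $(a^2+n^2)u_{2n}=3u_{2(n-1)}+3\sum_{j_1+j_2=n-1}u_{2j_1}u_{2j_2}+\sum_{j_1+j_2+j_3=n-1}u_{2j_1}u_{2j_2}u_{2j_3}-\sum_{1\le j_1,\,2j_1<n}(n-2j_1)^2u_{2j_1}u_{2(n-j_1)}$, all indices $j_i\ge1$. *)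

theory Defs
  imports "HOL-Computational_Algebra.Formal_Power_Series"
begin

text \<open>u n is the Taylor (power series) expansion at a = 0 of the rational
  function u_{2n}(a), as a formal power series in the variable a.
  The defining relation (a^2 + n^2) u_{2n} = RHS is solved by multiplying with
  the inverse of the power series a^2 + n^2 (constant term n^2 nonzero).
  u 0 is unused (all indices are at least 1).\<close>

fun u :: "nat \<Rightarrow> real fps" where
  "u 0 = 0"
| "u (Suc 0) = inverse (fps_X ^ 2 + 1)"
| "u (Suc (Suc m)) =
     (let n = Suc (Suc m) in
      inverse (fps_X ^ 2 + fps_const (real (n ^ 2))) *
        (3 * u (n - 1)
         + 3 * (\<Sum>j\<in>{1..n - 2}. u j * u (n - 1 - j))
         + (\<Sum>j1\<in>{1..n - 2}. \<Sum>j2\<in>{1..n - 2 - j1}.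
              if n - 1 - j1 - j2 \<ge> 1 then u j1 * u j2 * u (n - 1 - j1 - j2) else 0)
         - (\<Sum>j\<in>{j. 1 \<le> j \<and> 2 * j < n}. fps_const (real ((n - 2 * j) ^ 2)) * u j * u (n - j))))"

definition u1 :: "nat \<Rightarrow> real" where
  "u1 n = fps_nth (u n) 2"

end

theory Submission
  imports Defs
begin

unbundle fps_syntax

definition FS1 :: "real \<Rightarrow> real \<Rightarrow> real" where
  "FS1 N x = (- 2*x^3 + 3*N*x^2 - 3*x^2 + 9*N*x + 5*x) / 6"

definition FS2 :: "real \<Rightarrow> real \<Rightarrow> real" where
  "FS2 N x = (- 4*x^5 + 15*N*x^4 - 20*N^2*x^3 + 10*N^3*x^2 + 15*x^4 - 30*N*x^3 + 30*N^3*x + 90*x^3 - 205*N*x^2 + 140*N^2*x + 45*x^2 - 180*N*x - 146*x) / 120"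

definition FV :: "real \<Rightarrow> real \<Rightarrow> real" where
  "FV N x = (- 183*x^4 + 488*N*x^3 - 366*N^2*x^2 - 122*x^3 + 732*N*x^2 - 1098*N^2*x + 549*x^2 - 1220*N*x - 244*x) / 1728"

definition FX1 :: "real \<Rightarrow> real \<Rightarrow> real" where
  "FX1 N x = (610*x^6 - 2196*N*x^5 + 2745*N^2*x^4 - 1220*N^3*x^3 - 1098*x^5 + 5490*N^2*x^3 - 5490*N^3*x^2 - 16775*x^4 + 34160*N*x^3 - 13725*N^2*x^2 - 7930*N^3*x - 29280*x^3 + 71370*N*x^2 - 38430*N^2*x + 5185*x^2 + 43066*N*x + 41358*x) / 51840"

definition FX2 :: "real \<Rightarrow> real \<Rightarrow> real" where
  "FX2 N x = (- 305*x^6 + 1464*N*x^5 - 2745*N^2*x^4 + 2440*N^3*x^3 - 915*N^4*x^2 + 1647*x^5 - 5490*N*x^4 + 5490*N^2*x^3 - 2745*N^4*x + 4270*x^4 - 17080*N*x^3 + 25620*N^2*x^2 - 17080*N^3*x - 5865*x^3 + 10170*N*x^2 - 2745*N^2*x - 3965*x^2 + 22336*N*x + 22938*x) / 51840"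

definition FHA :: "real \<Rightarrow> real \<Rightarrow> real" where
  "FHA N x = (- 24*x^5 + 60*N*x^4 - 50*N^2*x^3 + 15*N^3*x^2 - 60*x^4 + 160*N*x^3 - 135*N^2*x^2 + 45*N^3*x + 60*N*x^2 - 55*N^2*x + 60*x^2 - 40*N*x + 24*x) / 30"

definition FHC1 :: "real \<Rightarrow> real \<Rightarrow> real" where
  "FHC1 N x = (- 2440*x^6 + 8784*N*x^5 - 11895*N^2*x^4 + 7320*N^3*x^3 - 1830*N^4*x^2 - 4392*x^5 + 18300*N*x^4 - 27450*N^2*x^3 + 18300*N^3*x^2 - 5490*N^4*x + 4880*x^4 - 7320*N*x^3 - 915*N^2*x^2 + 3660*N^3*x + 7320*x^3 - 18300*N*x^2 + 10980*N^2*x - 2440*x^2 - 1464*N*x - 2928*x) / 8640"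

definition FHC2 :: "real \<Rightarrow> real \<Rightarrow> real" where
  "FHC2 N x = (2440*x^6 - 5856*N*x^5 + 4575*N^2*x^4 - 1220*N^3*x^3 + 10248*x^5 - 25620*N*x^4 + 20130*N^2*x^3 - 5490*N^3*x^2 + 9760*x^4 - 31720*N*x^3 + 26535*N^2*x^2 - 7930*N^3*x - 7320*x^3 - 3660*N*x^2 + 7320*N^2*x - 12200*x^2 + 8296*N*x - 2928*x) / 8640"

definition PP :: "real \<Rightarrow> real" where "PP x = -61/144*(x+1)^2"
definition s1 :: "real \<Rightarrow> real" where "s1 k = FS1 k (k-1)"
definition vv :: "real \<Rightarrow> real" where "vv k = FV k (k-1)"
definition ww :: "real \<Rightarrow> real" where "ww k = vv k + (-11/36)*k + (1/16)*(k-1)"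


definition s2 :: "real \<Rightarrow> real" where "s2 k = FS2 k (k-1)"

lemma sum_closed:
  assumes "\<And>x. F (x+1) = F x + g (x+1)" "F 0 = 0"
  shows "(\<Sum>j=1..m. g (real j)) = F (real m)"
proof (induction m)
  case 0 then show ?case using assms(2) by simp
next
  case (Suc m) then show ?case using assms(1)[of "real m"] by (simp add: add.commute)
qed

lemma sum_s1: "(\<Sum>j=1..m. (\<lambda>y. (y + 1) * ((N - y) + 1)) (real j)) = FS1 N (real m)"
proof (rule sum_closed)
  show "FS1 N (x + 1) = FS1 N x + (\<lambda>y. (y + 1) * ((N - y) + 1)) (x + 1)" for x
    unfolding FS1_def by algebra
  show "FS1 N 0 = 0" by (simp add: FS1_def)
qed

lemma sum_s2: "(\<Sum>j=1..m. (\<lambda>y. (y + 1) * s1 (N - y)) (real j)) = FS2 N (real m)"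
proof (rule sum_closed)
  show "FS2 N (x + 1) = FS2 N x + (\<lambda>y. (y + 1) * s1 (N - y)) (x + 1)" for x
    unfolding FS2_def s1_def FS1_def by (simp add: field_simps) algebra
  show "FS2 N 0 = 0" by (simp add: FS2_def)
qed

lemma sum_v: "(\<Sum>j=1..m. (\<lambda>y. (y + 1) * PP (N - y)) (real j)) = FV N (real m)"
proof (rule sum_closed)
  show "FV N (x + 1) = FV N x + (\<lambda>y. (y + 1) * PP (N - y)) (x + 1)" for x
    unfolding FV_def PP_def by algebra
  show "FV N 0 = 0" by (simp add: FV_def)
qed

lemma sum_x1: "(\<Sum>j=1..m. (\<lambda>y. PP y * s1 (N - y)) (real j)) = FX1 N (real m)"
proof (rule sum_closed)
  show "FX1 N (x + 1) = FX1 N x + (\<lambda>y. PP y * s1 (N - y)) (x + 1)" for x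
    unfolding FX1_def PP_def s1_def FS1_def by algebra
  show "FX1 N 0 = 0" by (simp add: FX1_def)
qed

lemma sum_x2: "(\<Sum>j=1..m. (\<lambda>y. (y + 1) * ww (N - y)) (real j)) = FX2 N (real m)"
proof (rule sum_closed)
  show "FX2 N (x + 1) = FX2 N x + (\<lambda>y. (y + 1) * ww (N - y)) (x + 1)" for x
    unfolding FX2_def ww_def vv_def FV_def by algebra
  show "FX2 N 0 = 0" by (simp add: FX2_def)
qed

lemma sum_ha: "(\<Sum>j=1..m. (\<lambda>y. (N - 2 * y)^2 * (y + 1) * ((N - y) + 1)) (real j)) = FHA N (real m)"
proof (rule sum_closed)
  show "FHA N (x + 1) = FHA N x + (\<lambda>y. (N - 2 * y)^2 * (y + 1) * ((N - y) + 1)) (x + 1)" for x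
    unfolding FHA_def by algebra
  show "FHA N 0 = 0" by (simp add: FHA_def)
qed

lemma sum_hc1: "(\<Sum>j=1..m. (\<lambda>y. (N - 2 * y)^2 * (y + 1) * PP (N - y)) (real j)) = FHC1 N (real m)"
proof (rule sum_closed)
  show "FHC1 N (x + 1) = FHC1 N x + (\<lambda>y. (N - 2 * y)^2 * (y + 1) * PP (N - y)) (x + 1)" for x
    unfolding FHC1_def PP_def by algebra
  show "FHC1 N 0 = 0" by (simp add: FHC1_def)
qed

lemma sum_hc2: "(\<Sum>j=1..m. (\<lambda>y. (N - 2 * y)^2 * PP y * ((N - y) + 1)) (real j)) = FHC2 N (real m)"
proof (rule sum_closed)
  show "FHC2 N (x + 1) = FHC2 N x + (\<lambda>y. (N - 2 * y)^2 * PP y * ((N - y) + 1)) (x + 1)" for x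
    unfolding FHC2_def PP_def by algebra
  show "FHC2 N 0 = 0" by (simp add: FHC2_def)
qed



definition cv :: "(nat \<Rightarrow> real) \<Rightarrow> (nat \<Rightarrow> real) \<Rightarrow> nat \<Rightarrow> real" where
  "cv f g k = (\<Sum>j=1..k-1. f j * g (k-j))"

definition hs :: "(nat \<Rightarrow> real) \<Rightarrow> (nat \<Rightarrow> real) \<Rightarrow> nat \<Rightarrow> real" where
  "hs f g n = (\<Sum>j=1..(n-1) div 2. (real n - 2 * real j)^2 * f j * g (n-j))"

definition al :: "nat \<Rightarrow> real" where "al j = real j + 1"
definition Dd :: "nat \<Rightarrow> real" where "Dd j = (if j = 1 then -11/36 else if j = 2 then 1/16 else 0)"
definition gm :: "nat \<Rightarrow> real" where "gm j = PP (real j) + Dd j"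

lemma cv_cong:
  assumes "\<And>j. 1 \<le> j \<Longrightarrow> j < k \<Longrightarrow> f j = f' j" "\<And>j. 1 \<le> j \<Longrightarrow> j < k \<Longrightarrow> g j = g' j"
  shows "cv f g k = cv f' g' k"
  unfolding cv_def by (rule sum.cong) (auto simp: assms)

lemma cv_h: "cv (\<lambda>j. h^j * f j) (\<lambda>j. h^j * g j) k = h^k * cv f g k"
  unfolding cv_def sum_distrib_left
proof (rule sum.cong)
  fix j assume "j \<in> {1..k-1}"
  then have "j + (k-j) = k" by auto
  then have "h^j * h^(k-j) = h^k" by (metis power_add)
  then show "h ^ j * f j * (h ^ (k - j) * g (k - j)) = h ^ k * (f j * g (k - j))"
    by (metis (no_types, lifting) mult.assoc mult.left_commute)
qed simp

lemma cv_comm: "cv f g k = cv g f k"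
  unfolding cv_def
  by (rule sum.reindex_bij_witness[where i="\<lambda>j. k-j" and j="\<lambda>j. k-j"]) (auto simp: mult.commute)

lemma cv_add_r: "cv f (\<lambda>j. g j + g' j) k = cv f g k + cv f g' k"
  unfolding cv_def by (simp add: distrib_left sum.distrib)

lemma cv_diff_r: "cv f (\<lambda>j. g j - g' j) k = cv f g k - cv f g' k"
  unfolding cv_def by (simp add: right_diff_distrib sum_subtractf)

lemma cv_add_l: "cv (\<lambda>j. g j + g' j) f k = cv g f k + cv g' f k"
  unfolding cv_def by (simp add: distrib_right sum.distrib)

lemma sum_split12:
  fixes M :: nat
  assumes "M \<ge> 2"
  shows "(\<Sum>j=1..M. F j) = F 1 + F 2 + (\<Sum>j=3..M. F j)"
proof -
  have "(\<Sum>j=1..M. F j) = F 1 + (\<Sum>j=2..M. F j)"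
    using sum.atLeast_Suc_atMost[of 1 M F] assms by (simp add: numeral_2_eq_2)
  also have "(\<Sum>j=2..M. F j) = F 2 + (\<Sum>j=3..M. F j)" using assms
    using sum.atLeast_Suc_atMost[of 2 M F] by (simp add: eval_nat_numeral)
  finally show ?thesis by (simp only: add.assoc)
qed

lemma cv_D_l:
  assumes "k \<ge> 3"
  shows "cv Dd f k = -11/36 * f (k-1) + 1/16 * f (k-2)"
proof -
  have "cv Dd f k = Dd 1 * f (k-1) + Dd 2 * f (k-2) + (\<Sum>j=3..k-1. Dd j * f (k-j))"
    unfolding cv_def using assms by (subst sum_split12) auto
  also have "(\<Sum>j=3..k-1. Dd j * f (k-j)) = 0" by (rule sum.neutral) (auto simp: Dd_def)
  moreover have "Dd 1 = -11/36" "Dd 2 = 1/16" by (simp_all add: Dd_def)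
  ultimately show ?thesis by simp
qed

lemma cv_D_r:
  assumes "k \<ge> 3"
  shows "cv f Dd k = -11/36 * f (k-1) + 1/16 * f (k-2)"
  using cv_D_l[OF assms] cv_comm by metis

lemma hs_cong:
  assumes "\<And>j. 1 \<le> j \<Longrightarrow> j < n \<Longrightarrow> f j = f' j" "\<And>j. 1 \<le> j \<Longrightarrow> j < n \<Longrightarrow> g j = g' j"
  shows "hs f g n = hs f' g' n"
  unfolding hs_def by (rule sum.cong) (auto simp: assms)

lemma hs_h: "hs (\<lambda>j. h^j * f j) (\<lambda>j. h^j * g j) n = h^n * hs f g n"
  unfolding hs_def sum_distrib_left
proof (rule sum.cong)
  fix j assume "j \<in> {1..(n-1) div 2}"
  then have "j + (n-j) = n" by auto
  then have "h^j * h^(n-j) = h^n" by (metis power_add)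
  then show "(real n - 2 * real j)^2 * (h ^ j * f j) * (h ^ (n - j) * g (n - j)) =
     h ^ n * ((real n - 2 * real j)^2 * f j * g (n - j))"
    by (metis (no_types, lifting) mult.assoc mult.left_commute)
qed simp

lemma hs_add_l: "hs (\<lambda>j. g j + g' j) f n = hs g f n + hs g' f n"
  unfolding hs_def by (simp add: distrib_right distrib_left sum.distrib)

lemma hs_D_l:
  assumes "n \<ge> 5"
  shows "hs Dd f n = (real n - 2)^2 * (-11/36) * f (n-1) + (real n - 4)^2 * (1/16) * f (n-2)"
proof -
  have M: "(n-1) div 2 \<ge> 2" using assms by linarith
  have "hs Dd f n = (real n - 2 * 1)^2 * Dd 1 * f (n-1) + (real n - 2 * 2)^2 * Dd 2 * f (n-2)
     + (\<Sum>j=3..(n-1) div 2. (real n - 2 * real j)^2 * Dd j * f (n-j))"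
    unfolding hs_def using M by (subst sum_split12) auto
  also have "(\<Sum>j=3..(n-1) div 2. (real n - 2 * real j)^2 * Dd j * f (n-j)) = 0"
    by (rule sum.neutral) (auto simp: Dd_def)
  moreover have "Dd 1 = -11/36" "Dd 2 = 1/16" by (simp_all add: Dd_def)
  ultimately show ?thesis by simp
qed

lemma hs_D_r:
  assumes "n \<ge> 5"
  shows "hs f Dd n = 0"
  unfolding hs_def by (rule sum.neutral) (use assms in \<open>auto simp: Dd_def\<close>)

lemma cv_poly:
  "cv (\<lambda>j. p (real j)) (\<lambda>j. q (real j)) k = (\<Sum>j=1..k-1. (\<lambda>y. p y * q (real k - y)) (real j))"
  unfolding cv_def by (rule sum.cong) (auto simp: of_nat_diff)

lemma al_eq: "al = (\<lambda>j. real j + 1)" by (simp add: al_def fun_eq_iff)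

lemma cv_s1: "k \<ge> 1 \<Longrightarrow> cv al al k = s1 (real k)"
  using cv_poly[of "\<lambda>y. y + 1" "\<lambda>y. y + 1" k] sum_s1[of "real k" "k-1"]
  by (simp add: al_eq s1_def of_nat_diff)



lemma cv_s2: "k \<ge> 1 \<Longrightarrow> cv al (\<lambda>m. s1 (real m)) k = s2 (real k)"
  using cv_poly[of "\<lambda>y. y + 1" "s1" k] sum_s2[of "real k" "k-1"]
  by (simp add: al_eq s2_def of_nat_diff)

lemma cv_v: "k \<ge> 1 \<Longrightarrow> cv al (\<lambda>m. PP (real m)) k = vv (real k)"
  using cv_poly[of "\<lambda>y. y + 1" "PP" k] sum_v[of "real k" "k-1"]
  by (simp add: al_eq vv_def of_nat_diff)

lemma cv_x1: "k \<ge> 1 \<Longrightarrow> cv (\<lambda>m. PP (real m)) (\<lambda>m. s1 (real m)) k = FX1 (real k) (real k - 1)"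
  using cv_poly[of "PP" "s1" k] sum_x1[of "real k" "k-1"]
  by (simp add: of_nat_diff)

lemma cv_x2: "k \<ge> 1 \<Longrightarrow> cv al (\<lambda>m. ww (real m)) k = FX2 (real k) (real k - 1)"
  using cv_poly[of "\<lambda>y. y + 1" "ww" k] sum_x2[of "real k" "k-1"]
  by (simp add: al_eq of_nat_diff)

lemma hs_poly:
  "hs (\<lambda>j. p (real j)) (\<lambda>j. q (real j)) n =
     (\<Sum>j=1..(n-1) div 2. (\<lambda>y. (real n - 2 * y)^2 * p y * q (real n - y)) (real j))"
  unfolding hs_def by (rule sum.cong) (auto simp: of_nat_diff)

lemma hs_a: "hs al al n = FHA (real n) (real ((n-1) div 2))"
  using hs_poly[of "\<lambda>y. y + 1" "\<lambda>y. y + 1" n] sum_ha[of "real n" "(n-1) div 2"]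
  by (simp add: al_eq)

lemma hs_c1: "hs al (\<lambda>m. PP (real m)) n = FHC1 (real n) (real ((n-1) div 2))"
  using hs_poly[of "\<lambda>y. y + 1" "PP" n] sum_hc1[of "real n" "(n-1) div 2"]
  by (simp add: al_eq)

lemma hs_c2: "hs (\<lambda>m. PP (real m)) al n = FHC2 (real n) (real ((n-1) div 2))"
  using hs_poly[of "PP" "\<lambda>y. y + 1" n] sum_hc2[of "real n" "(n-1) div 2"]
  by (simp add: al_eq)

lemma hs_add_r: "hs f (\<lambda>j. g j + g' j) n = hs f g n + hs f g' n"
  unfolding hs_def by (simp add: distrib_right distrib_left sum.distrib)

lemma gm_eq: "gm = (\<lambda>j. PP (real j) + Dd j)" by (simp add: gm_def fun_eq_iff)

lemma FV_0: "vv 1 = 0" by (simp add: vv_def FV_def)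
lemma FV_2: "vv 2 = 2 * PP 1" by (simp add: vv_def FV_def PP_def)

lemma cvg1: "k \<ge> 1 \<Longrightarrow> cv al gm k = ww (real k) - Dd k"
proof -
  assume k: "k \<ge> 1"
  have e: "cv al gm k = vv (real k) + cv al Dd k"
    unfolding gm_eq cv_add_r using cv_v[OF k] by simp
  consider "k = 1" | "k = 2" | "k \<ge> 3" using k by linarith
  then show ?thesis
  proof cases
    case 1 then show ?thesis unfolding e by (simp add: cv_def ww_def Dd_def FV_0)
  next
    case 2 then show ?thesis unfolding e by (simp add: cv_def ww_def Dd_def vv_def FV_def al_def)
  next
    case 3
    have "cv al Dd k = -11/36 * real k + 1/16 * (real k - 1)"
      using cv_D_r[OF 3, of al] 3 by (simp add: al_def of_nat_diff)
    then show ?thesis unfolding e ww_def using 3 by (simp add: Dd_def)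
  qed
qed

lemma cvg2: "k \<ge> 1 \<Longrightarrow> cv gm al k = ww (real k) - Dd k"
  using cvg1 cv_comm by metis

lemma cvg3: "k \<ge> 3 \<Longrightarrow> cv gm (\<lambda>m. s1 (real m)) k =
   FX1 (real k) (real k - 1) - 11/36 * s1 (real k - 1) + 1/16 * s1 (real k - 2)"
proof -
  assume k: "k \<ge> 3"
  have "cv gm (\<lambda>m. s1 (real m)) k = FX1 (real k) (real k - 1) + cv Dd (\<lambda>m. s1 (real m)) k"
    unfolding gm_eq cv_add_l using cv_x1[of k] k by simp
  also have "cv Dd (\<lambda>m. s1 (real m)) k = -11/36 * s1 (real k - 1) + 1/16 * s1 (real k - 2)"
    using cv_D_l[OF k] k by (simp add: of_nat_diff)
  finally show ?thesis by simp
qed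

lemma cvg4: "k \<ge> 3 \<Longrightarrow> cv al (\<lambda>m. ww (real m) - Dd m) k =
   FX2 (real k) (real k - 1) - (-11/36 * real k + 1/16 * (real k - 1))"
proof -
  assume k: "k \<ge> 3"
  have "cv al Dd k = -11/36 * real k + 1/16 * (real k - 1)"
    using cv_D_r[OF k, of al] k by (simp add: al_def of_nat_diff)
  then show ?thesis unfolding cv_diff_r using cv_x2[of k] k by simp
qed

lemma hsg1: "n \<ge> 5 \<Longrightarrow> hs al gm n = FHC1 (real n) (real ((n-1) div 2))"
  unfolding gm_eq hs_add_r hs_c1 using hs_D_r by simp

lemma hsg2: "n \<ge> 5 \<Longrightarrow> hs gm al n = FHC2 (real n) (real ((n-1) div 2))
   + (real n - 2)^2 * (-11/36) * real n + (real n - 4)^2 * (1/16) * (real n - 1)"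
proof -
  assume n: "n \<ge> 5"
  show ?thesis unfolding gm_eq hs_add_l hs_c2 using hs_D_l[OF n, of al] n
    by (simp add: al_def of_nat_diff)
qed



section \<open>Power series level\<close>

lemma num_mult_nth: "(numeral k * (f::real fps)) $ i = numeral k * f $ i"
  by (metis fps_numeral_fps_const fps_mult_left_const_nth)

lemma mult_nth2: "((f::real fps) * g) $ 2 = f$0*g$2 + f$1*g$1 + f$2*g$0"
  by (simp add: fps_mult_nth numeral_2_eq_2 sum.atLeast0_atMost_Suc)

lemma set_half: "{j. 1 \<le> j \<and> 2 * j < (n::nat)} = {1..(n-1) div 2}"
  by auto

lemma u_rec:
  assumes "n \<ge> 2"
  shows "(fps_X ^ 2 + fps_const (real (n ^ 2))) * u n =
        3 * u (n - 1)
         + 3 * (\<Sum>j\<in>{1..n - 2}. u j * u (n - 1 - j))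
         + (\<Sum>j1\<in>{1..n - 2}. \<Sum>j2\<in>{1..n - 2 - j1}.
              if n - 1 - j1 - j2 \<ge> 1 then u j1 * u j2 * u (n - 1 - j1 - j2) else 0)
         - (\<Sum>j\<in>{j. 1 \<le> j \<and> 2 * j < n}. fps_const (real ((n - 2 * j) ^ 2)) * u j * u (n - j))"
proof -
  obtain m where n: "n = Suc (Suc m)" using assms by (metis add_2_eq_Suc le_Suc_ex)
  have ne: "(fps_X ^ 2 + fps_const (real (n ^ 2)) :: real fps) $ 0 \<noteq> 0"
    using assms by simp
  show ?thesis
    unfolding n u.simps Let_def
    by (simp only: mult.assoc[symmetric] inverse_mult_eq_1'[OF ne[unfolded n]] mult_1_left)
qed

lemma lhs_nth: "((fps_X ^ 2 + fps_const c) * (f::real fps)) $ i = (if i < 2 then 0 else f $ (i-2)) + c * f $ i"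
  by (simp add: distrib_right fps_X_power_mult_nth)

lemma u1_eq: "(fps_X ^ 2 + fps_const 1) * u 1 = 1"
  by (simp add: inverse_mult_eq_1')

lemma u_rec2:
  assumes "n \<ge> 2"
  shows "(fps_X ^ 2 + fps_const (real (n ^ 2))) * u n =
        3 * u (n - 1)
         + 3 * (\<Sum>j=1..n - 2. u j * u (n - 1 - j))
         + (\<Sum>j1=1..n - 2. \<Sum>j2=1..n - 2 - j1. u j1 * u j2 * u (n - 1 - j1 - j2))
         - (\<Sum>j=1..(n-1) div 2. fps_const ((real n - 2 * real j)^2) * (u j * u (n - j)))"
proof -
  have a: "(\<Sum>j1\<in>{1..n - 2}. \<Sum>j2\<in>{1..n - 2 - j1}.
              if n - 1 - j1 - j2 \<ge> 1 then u j1 * u j2 * u (n - 1 - j1 - j2) else 0)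
        = (\<Sum>j1=1..n - 2. \<Sum>j2=1..n - 2 - j1. u j1 * u j2 * u (n - 1 - j1 - j2))"
    by (intro sum.cong refl) auto
  have b: "(\<Sum>j\<in>{j. 1 \<le> j \<and> 2 * j < n}. fps_const (real ((n - 2 * j) ^ 2)) * u j * u (n - j))
     = (\<Sum>j=1..(n-1) div 2. fps_const ((real n - 2 * real j)^2) * (u j * u (n - j)))"
    unfolding set_half by (intro sum.cong refl) (auto simp: of_nat_diff mult.assoc)
  show ?thesis using u_rec[OF assms] unfolding a b .
qed

lemma coeffR:
  assumes "n \<ge> 2"
  shows "(if i < 2 then 0 else u n $ (i-2)) + real (n^2) * u n $ i =
        3 * u (n - 1) $ i
         + 3 * (\<Sum>j=1..n - 2. (u j * u (n - 1 - j)) $ i)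
         + (\<Sum>j1=1..n - 2. \<Sum>j2=1..n - 2 - j1. (u j1 * u j2 * u (n - 1 - j1 - j2)) $ i)
         - (\<Sum>j=1..(n-1) div 2. (real n - 2 * real j)^2 * (u j * u (n - j)) $ i)"
proof -
  have "((fps_X ^ 2 + fps_const (real (n ^ 2))) * u n) $ i = (3 * u (n - 1)
         + 3 * (\<Sum>j=1..n - 2. u j * u (n - 1 - j))
         + (\<Sum>j1=1..n - 2. \<Sum>j2=1..n - 2 - j1. u j1 * u j2 * u (n - 1 - j1 - j2))
         - (\<Sum>j=1..(n-1) div 2. fps_const ((real n - 2 * real j)^2) * (u j * u (n - j)))) $ i"
    using u_rec2[OF assms] by simp
  then show ?thesis
    unfolding lhs_nth fps_sub_nth fps_add_nth num_mult_nth fps_sum_nth fps_mult_left_const_nth .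
qed

lemma u0: "u 0 = 0" by simp

lemma Bz: "u n $ 1 = 0"
proof (induction n rule: less_induct)
  case (less n)
  consider "n = 0" | "n = 1" | "n \<ge> 2" by linarith
  then show ?case
  proof cases
    case 1 then show ?thesis by simp
  next
    case 2
    have "((fps_X ^ 2 + fps_const 1) * u 1) $ 1 = (1::real fps) $ 1" by (simp only: u1_eq)
    then show ?thesis unfolding lhs_nth 2 by simp
  next
    case 3
    have IH: "\<And>m. m < n \<Longrightarrow> u m $ 1 = 0" using less by blast
    have IH': "\<And>m. m < n \<Longrightarrow> u m $ Suc 0 = 0" using less by simp
    have s1: "(\<Sum>j=1..n - 2. (u j * u (n - 1 - j)) $ 1) = 0"
      by (rule sum.neutral) (use 3 in \<open>auto simp: fps_mult_nth_1 IH IH'\<close>)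
    have s2: "(\<Sum>j1=1..n - 2. \<Sum>j2=1..n - 2 - j1. (u j1 * u j2 * u (n - 1 - j1 - j2)) $ 1) = 0"
      by (intro sum.neutral ballI) (use 3 in \<open>auto simp: fps_mult_nth_1 IH IH'\<close>)
    have s3: "(\<Sum>j=1..(n-1) div 2. (real n - 2 * real j)^2 * (u j * u (n - j)) $ 1) = 0"
      by (rule sum.neutral) (use 3 in \<open>auto simp: fps_mult_nth_1 IH IH'\<close>)
    have "real (n^2) * u n $ 1 = 0"
      using coeffR[OF 3, of 1] unfolding s1 s2 s3 using IH[of "n-1"] 3 by simp
    then show ?thesis using 3 by simp
  qed
qed

lemma Bz1: "u n $ Suc 0 = 0" using Bz[of n] by simp

lemma m1z: "(u a * u b) $ 1 = 0" by (simp add: fps_mult_nth_1 Bz Bz1)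
lemma m2z: "(u a * u b) $ 2 = u a $ 0 * u b $ 2 + u a $ 2 * u b $ 0" by (simp add: mult_nth2 Bz Bz1)
lemma m3z: "(u a * u b * u c) $ 2 = u a$0 * (u b$0 * u c$2) + u a$0 * (u b$2 * u c$0) + u a$2 * (u b$0 * u c$0)"
  using mult_nth2[of "u a * u b" "u c"] by (simp add: m2z m1z Bz Bz1 algebra_simps)
lemma m3z0: "(u a * u b * u c) $ 0 = u a$0 * (u b$0 * u c$0)" by simp

lemma cv_pair: "n \<ge> 2 \<Longrightarrow> (\<Sum>j=1..n - 2. f j * g (n - 1 - j)) = cv f g (n-1)"
  unfolding cv_def by (simp add: diff_diff_left numeral_2_eq_2)

lemma cv_triple: "n \<ge> 2 \<Longrightarrow> (\<Sum>j1=1..n - 2. \<Sum>j2=1..n - 2 - j1. f j1 * (g j2 * h (n - 1 - j1 - j2))) = cv f (cv g h) (n-1)"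
  unfolding cv_def sum_distrib_left by (intro sum.cong refl) (simp_all add: diff_diff_left numeral_2_eq_2)

lemma hs_unf: "(\<Sum>j=1..(n-1) div 2. (real n - 2 * real j)^2 * (f j * g (n - j))) = hs f g n"
  unfolding hs_def by (simp add: mult.assoc)

definition AA :: "nat \<Rightarrow> real" where "AA j = u j $ 0"
definition CC :: "nat \<Rightarrow> real" where "CC j = u j $ 2"

lemma coeff0:
  assumes "n \<ge> 2"
  shows "real (n^2) * AA n = 3 * AA (n-1) + 3 * cv AA AA (n-1) + cv AA (cv AA AA) (n-1) - hs AA AA n"
proof -
  note e = coeffR[OF assms, of 0]
  have "(\<Sum>j1=1..n - 2. \<Sum>j2=1..n - 2 - j1. (u j1 * u j2 * u (n - 1 - j1 - j2)) $ 0) = cv AA (cv AA AA) (n-1)"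
    unfolding m3z0 using cv_triple[OF assms, of AA AA AA] by (simp add: AA_def)
  moreover have "(\<Sum>j=1..n - 2. (u j * u (n - 1 - j)) $ 0) = cv AA AA (n-1)"
    using cv_pair[OF assms, of AA AA] by (simp add: AA_def)
  moreover have "(\<Sum>j=1..(n-1) div 2. (real n - 2 * real j)^2 * (u j * u (n - j)) $ 0) = hs AA AA n"
    using hs_unf[where f=AA and g=AA and n=n] by (simp add: AA_def)
  ultimately show ?thesis using e by (simp add: AA_def)
qed

lemma coeff2:
  assumes "n \<ge> 2"
  shows "real (n^2) * CC n + AA n = 3 * CC (n-1) + 3 * (cv AA CC (n-1) + cv CC AA (n-1))
    + (cv AA (cv AA CC) (n-1) + cv AA (cv CC AA) (n-1) + cv CC (cv AA AA) (n-1)) - (hs AA CC n + hs CC AA n)"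
proof -
  have p: "(\<Sum>j=1..n - 2. (u j * u (n - 1 - j)) $ 2) = cv AA CC (n-1) + cv CC AA (n-1)"
    unfolding m2z sum.distrib using cv_pair[OF assms, of AA CC] cv_pair[OF assms, of CC AA]
    by (simp add: AA_def CC_def)
  have t: "(\<Sum>j1=1..n - 2. \<Sum>j2=1..n - 2 - j1. (u j1 * u j2 * u (n - 1 - j1 - j2)) $ 2) =
     cv AA (cv AA CC) (n-1) + cv AA (cv CC AA) (n-1) + cv CC (cv AA AA) (n-1)"
    unfolding m3z sum.distrib using cv_triple[OF assms, of AA AA CC]
      cv_triple[OF assms, of AA CC AA] cv_triple[OF assms, of CC AA AA]
    by (simp add: AA_def CC_def)
  have h: "(\<Sum>j=1..(n-1) div 2. (real n - 2 * real j)^2 * (u j * u (n - j)) $ 2) = hs AA CC n + hs CC AA n"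
    unfolding m2z distrib_left sum.distrib using hs_unf[where f=AA and g=CC and n=n]
      hs_unf[where f=CC and g=AA and n=n] by (simp add: AA_def CC_def)
  show ?thesis using coeffR[OF assms, of 2] unfolding p t h by (simp add: AA_def CC_def)
qed



section \<open>Polynomial identities\<close>

lemma polyA_odd: "(2*x+1)^2 * ((2*x+1) + 1) =
   2*(3*(2*x+1) + 3*s1((2*x+1) - 1) + s2((2*x+1) - 1)) - FHA (2*x+1) x"
  unfolding s1_def s2_def FS1_def FS2_def FHA_def by algebra

lemma polyA_even: "(2*x+2)^2 * ((2*x+2) + 1) =
   2*(3*(2*x+2) + 3*s1((2*x+2) - 1) + s2((2*x+2) - 1)) - FHA (2*x+2) x"
  unfolding s1_def s2_def FS1_def FS2_def FHA_def by algebra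

lemma parity_cases:
  fixes n :: nat
  obtains m where "n = 2*m+1" "(n-1) div 2 = m" | m where "n = 2*m+2" "(n-1) div 2 = m" "n \<ge> 2"
  | "n = 0"
proof -
  have "n = 0 \<or> odd n \<or> (even n \<and> n \<ge> 2)" by presburger
  then consider "n = 0" | "odd n" | "even n" "n \<ge> 2" by blast
  then show ?thesis
  proof cases
    case 2 then obtain m where "n = 2*m+1" by (metis oddE)
    then show ?thesis using that(1)[of m] by simp
  next
    case 3 then obtain k where k: "n = 2*k" by (auto elim: evenE)
    then have "n = 2*(k-1)+2" using 3 by simp
    then show ?thesis using that(2)[of "k-1"] by simp
  qed (use that in auto)
qed

lemma polyA: "n \<ge> 2 \<Longrightarrow> real n ^ 2 * (real n + 1) =
   2*(3*real n + 3*s1(real n - 1) + s2(real n - 1)) - FHA (real n) (real ((n-1) div 2))"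
proof -
  assume n: "n \<ge> 2"
  then show ?thesis
  proof (cases n rule: parity_cases)
    case (1 m) then have r: "real n = 2 * real m + 1" "real ((n-1) div 2) = real m" by simp_all
    show ?thesis unfolding r by (rule polyA_odd)
  next
    case (2 m) then have r: "real n = 2 * real m + 2" "real ((n-1) div 2) = real m" by simp_all
    show ?thesis unfolding r by (rule polyA_even)
  qed simp
qed

lemma polyC_odd: "(2*x+1)^2 * PP (2*x+1) + ((2*x+1) + 1) =
   2*(3*PP ((2*x+1) - 1) + 6*ww ((2*x+1) - 1)
      + (FX1 ((2*x+1) - 1) ((2*x+1) - 1 - 1) - 11/36 * s1 ((2*x+1) - 1 - 1) + 1/16 * s1 ((2*x+1) - 1 - 2))
      + 2*(FX2 ((2*x+1) - 1) ((2*x+1) - 1 - 1) - (-11/36 * ((2*x+1) - 1) + 1/16 * ((2*x+1) - 1 - 1))))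
   - (FHC1 (2*x+1) x + (FHC2 (2*x+1) x + ((2*x+1) - 2)^2 * (-11/36) * (2*x+1) + ((2*x+1) - 4)^2 * (1/16) * ((2*x+1) - 1)))"
  unfolding s1_def FS1_def PP_def ww_def vv_def FV_def FX1_def FX2_def FHC1_def FHC2_def
  by (simp add: field_simps) algebra

lemma polyC_even: "(2*x+2)^2 * PP (2*x+2) + ((2*x+2) + 1) =
   2*(3*PP ((2*x+2) - 1) + 6*ww ((2*x+2) - 1)
      + (FX1 ((2*x+2) - 1) ((2*x+2) - 1 - 1) - 11/36 * s1 ((2*x+2) - 1 - 1) + 1/16 * s1 ((2*x+2) - 1 - 2))
      + 2*(FX2 ((2*x+2) - 1) ((2*x+2) - 1 - 1) - (-11/36 * ((2*x+2) - 1) + 1/16 * ((2*x+2) - 1 - 1))))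
   - (FHC1 (2*x+2) x + (FHC2 (2*x+2) x + ((2*x+2) - 2)^2 * (-11/36) * (2*x+2) + ((2*x+2) - 4)^2 * (1/16) * ((2*x+2) - 1)))"
  unfolding s1_def FS1_def PP_def ww_def vv_def FV_def FX1_def FX2_def FHC1_def FHC2_def
  by (simp add: field_simps) algebra


lemma half_pow: "n \<ge> 1 \<Longrightarrow> (1/2::real)^(n-1) = 2 * (1/2)^n"
  by (cases n) auto

lemma AA1: "AA 1 = 1"
proof -
  have "((fps_X ^ 2 + fps_const 1) * u 1) $ 0 = (1::real fps) $ 0" by (simp only: u1_eq)
  then show ?thesis unfolding lhs_nth AA_def by simp
qed

lemma CC1: "CC 1 = -1"
proof -
  have "((fps_X ^ 2 + fps_const 1) * u 1) $ 2 = (1::real fps) $ 2" by (simp only: u1_eq)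
  then show ?thesis using AA1 unfolding lhs_nth AA_def CC_def by simp
qed

lemma Af: "n \<ge> 1 \<Longrightarrow> AA n = (1/2)^n * al n"
proof (induction n rule: less_induct)
  case (less n)
  show ?case
  proof (cases "n = 1")
    case True then show ?thesis using AA1 by (simp add: al_def)
  next
    case False
    then have n: "n \<ge> 2" using less.prems by linarith
    define h :: real where "h = 1/2"
    define A' where "A' = (\<lambda>j. h^j * al j)"
    have IH: "AA j = A' j" if "1 \<le> j" "j < n" for j
      using less.IH that unfolding A'_def h_def by blast
    have c1m: "cv AA AA m = h^m * s1 (real m)" if "1 \<le> m" "m < n" for m
    proof -
      have "cv AA AA m = cv A' A' m" by (rule cv_cong) (use that in \<open>auto intro: IH\<close>)
      also have "\<dots> = h^m * cv al al m" unfolding A'_def by (rule cv_h)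
      finally show ?thesis using cv_s1[of m] that by simp
    qed
    have c1: "cv AA AA (n-1) = h^(n-1) * s1 (real n - 1)"
      using c1m[of "n-1"] n by (simp add: of_nat_diff)
    have "cv AA (cv AA AA) (n-1) = cv A' (\<lambda>m. h^m * s1 (real m)) (n-1)"
      by (rule cv_cong) (auto intro: IH c1m)
    also have "\<dots> = h^(n-1) * cv al (\<lambda>m. s1 (real m)) (n-1)" unfolding A'_def by (rule cv_h)
    also have "cv al (\<lambda>m. s1 (real m)) (n-1) = s2 (real n - 1)"
      using cv_s2[of "n-1"] n by (simp add: of_nat_diff)
    finally have c2: "cv AA (cv AA AA) (n-1) = h^(n-1) * s2 (real n - 1)" .
    have "hs AA AA n = hs A' A' n" by (rule hs_cong) (auto intro: IH)
    also have "\<dots> = h^n * hs al al n" unfolding A'_def by (rule hs_h)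
    finally have c3: "hs AA AA n = h^n * FHA (real n) (real ((n-1) div 2))" by (simp add: hs_a)
    have c0: "AA (n-1) = h^(n-1) * real n" using IH[of "n-1"] n by (simp add: A'_def al_def of_nat_diff)
    have hp: "h^(n-1) = 2 * h^n" unfolding h_def using half_pow n by simp
    have "real (n^2) * AA n = h^n * (2*(3*real n + 3*s1(real n - 1) + s2(real n - 1)) - FHA (real n) (real ((n-1) div 2)))"
      using coeff0[OF n] unfolding c0 c1 c2 c3 hp by (simp add: algebra_simps)
    also have "\<dots> = h^n * (real n ^ 2 * (real n + 1))" using polyA[OF n] by simp
    finally have "real (n^2) * AA n = real (n^2) * (h^n * al n)" by (simp add: al_def algebra_simps)
    then show ?thesis using n unfolding h_def by simp
  qed
qed

lemma AAv: "AA 2 = 3/4" "AA 3 = 1/2" "AA 4 = 5/16"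
  using Af[of 2] Af[of 3] Af[of 4] by (simp_all add: al_def power_one_over)

lemma cv1: "cv f g 1 = 0" by (simp add: cv_def)
lemma cv1': "cv f g (Suc 0) = 0" by (simp add: cv_def)
lemma cv2: "cv f g 2 = f 1 * g 1" by (simp add: cv_def)
lemma cv3: "cv f g 3 = f 1 * g 2 + f 2 * g 1"
  by (simp add: cv_def numeral_3_eq_3 numeral_2_eq_2)
lemma hs2: "hs f g 2 = 0" by (simp add: hs_def)
lemma hs3: "hs f g 3 = f 1 * g 2" by (simp add: hs_def)
lemma hs4: "hs f g 4 = 4 * f 1 * g 3" by (simp add: hs_def)

lemma CC2: "CC 2 = -15/16"
  using coeff2[of 2] AAv AA1 CC1 by (simp add: cv1 cv1' hs2)

lemma CC3: "CC 3 = -61/72"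
  using coeff2[of 3] AAv AA1 CC1 CC2 by (simp add: cv1 cv1' cv2 hs3)

lemma CC4: "CC 4 = -1525/2304"
  using coeff2[of 4] AAv AA1 CC1 CC2 CC3 by (simp add: cv1 cv1' cv2 cv3 hs4)



lemma polyC: "n \<ge> 2 \<Longrightarrow> (real n)^2 * PP (real n) + ((real n) + 1) =
   2*(3*PP ((real n) - 1) + 6*ww ((real n) - 1)
      + (FX1 ((real n) - 1) ((real n) - 1 - 1) - 11/36 * s1 ((real n) - 1 - 1) + 1/16 * s1 ((real n) - 1 - 2))
      + 2*(FX2 ((real n) - 1) ((real n) - 1 - 1) - (-11/36 * ((real n) - 1) + 1/16 * ((real n) - 1 - 1))))
   - (FHC1 (real n) (real ((n-1) div 2)) + (FHC2 (real n) (real ((n-1) div 2)) + ((real n) - 2)^2 * (-11/36) * (real n) + ((real n) - 4)^2 * (1/16) * ((real n) - 1)))"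
proof -
  assume n: "n \<ge> 2"
  then show ?thesis
  proof (cases n rule: parity_cases)
    case (1 m) then have r: "real n = 2 * real m + 1" "real ((n-1) div 2) = real m" by simp_all
    show ?thesis unfolding r by (rule polyC_odd)
  next
    case (2 m) then have r: "real n = 2 * real m + 2" "real ((n-1) div 2) = real m" by simp_all
    show ?thesis unfolding r by (rule polyC_even)
  qed simp
qed

lemma Cf: "n \<ge> 1 \<Longrightarrow> CC n = (1/2)^n * gm n"
proof (induction n rule: less_induct)
  case (less n)
  consider "n = 1" | "n = 2" | "n = 3" | "n = 4" | "n \<ge> 5" using less.prems by linarith
  then show ?case
  proof cases
    case 1 then show ?thesis using CC1 by (simp add: gm_def PP_def Dd_def)
  next
    case 2 then show ?thesis using CC2 by (simp add: gm_def PP_def Dd_def power_one_over)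
  next
    case 3 then show ?thesis using CC3 by (simp add: gm_def PP_def Dd_def power_one_over)
  next
    case 4 then show ?thesis using CC4 by (simp add: gm_def PP_def Dd_def power_one_over)
  next
    case 5
    then have n2: "n \<ge> 2" by simp
    define h :: real where "h = 1/2"
    define A' where "A' = (\<lambda>j. h^j * al j)"
    define C' where "C' = (\<lambda>j. h^j * gm j)"
    have IA: "AA j = A' j" if "1 \<le> j" for j
      using Af that unfolding A'_def h_def by blast
    have IC: "CC j = C' j" if "1 \<le> j" "j < n" for j
      using less.IH that unfolding C'_def h_def by blast
    have cAC: "cv AA CC m = h^m * (ww (real m) - Dd m)" if "1 \<le> m" "m < n" for m
    proof -
      have "cv AA CC m = cv A' C' m" by (rule cv_cong) (use that in \<open>auto intro: IA IC\<close>)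
      also have "\<dots> = h^m * cv al gm m" unfolding A'_def C'_def by (rule cv_h)
      finally show ?thesis using cvg1[of m] that by simp
    qed
    have cCA: "cv CC AA m = h^m * (ww (real m) - Dd m)" if "1 \<le> m" "m < n" for m
      using cAC[OF that] cv_comm by metis
    have cAA: "cv AA AA m = h^m * s1 (real m)" if "1 \<le> m" for m
    proof -
      have "cv AA AA m = cv A' A' m" by (rule cv_cong) (use that in \<open>auto intro: IA\<close>)
      also have "\<dots> = h^m * cv al al m" unfolding A'_def by (rule cv_h)
      finally show ?thesis using cv_s1[of m] that by simp
    qed
    have rn: "real (n-1) = real n - 1" using n2 by (simp add: of_nat_diff)
    have k3: "n - 1 \<ge> 3" using 5 by simp
    have "cv AA (cv AA CC) (n-1) = cv A' (\<lambda>m. h^m * (ww (real m) - Dd m)) (n-1)"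
      by (rule cv_cong) (auto intro: IA cAC)
    also have "\<dots> = h^(n-1) * cv al (\<lambda>m. ww (real m) - Dd m) (n-1)" unfolding A'_def by (rule cv_h)
    finally have t1: "cv AA (cv AA CC) (n-1) = h^(n-1) *
       (FX2 (real n - 1) (real n - 1 - 1) - (-11/36 * (real n - 1) + 1/16 * (real n - 1 - 1)))"
      using cvg4[OF k3] unfolding rn by simp
    have "cv AA (cv CC AA) (n-1) = cv A' (\<lambda>m. h^m * (ww (real m) - Dd m)) (n-1)"
      by (rule cv_cong) (auto intro: IA cCA)
    also have "\<dots> = h^(n-1) * cv al (\<lambda>m. ww (real m) - Dd m) (n-1)" unfolding A'_def by (rule cv_h)
    finally have t2: "cv AA (cv CC AA) (n-1) = h^(n-1) *
       (FX2 (real n - 1) (real n - 1 - 1) - (-11/36 * (real n - 1) + 1/16 * (real n - 1 - 1)))"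
      using cvg4[OF k3] unfolding rn by simp
    have "cv CC (cv AA AA) (n-1) = cv C' (\<lambda>m. h^m * s1 (real m)) (n-1)"
      by (rule cv_cong) (auto intro: IC cAA)
    also have "\<dots> = h^(n-1) * cv gm (\<lambda>m. s1 (real m)) (n-1)" unfolding C'_def by (rule cv_h)
    finally have t3: "cv CC (cv AA AA) (n-1) = h^(n-1) *
       (FX1 (real n - 1) (real n - 1 - 1) - 11/36 * s1 (real n - 1 - 1) + 1/16 * s1 (real n - 1 - 2))"
      using cvg3[OF k3] unfolding rn by simp
    have "hs AA CC n = hs A' C' n" by (rule hs_cong) (auto intro: IA IC)
    also have "\<dots> = h^n * hs al gm n" unfolding A'_def C'_def by (rule hs_h)
    finally have h1: "hs AA CC n = h^n * FHC1 (real n) (real ((n-1) div 2))" using hsg1[OF 5] by simp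
    have "hs CC AA n = hs C' A' n" by (rule hs_cong) (auto intro: IA IC)
    also have "\<dots> = h^n * hs gm al n" unfolding A'_def C'_def by (rule hs_h)
    finally have h2: "hs CC AA n = h^n * (FHC2 (real n) (real ((n-1) div 2))
      + (real n - 2)^2 * (-11/36) * real n + (real n - 4)^2 * (1/16) * (real n - 1))"
      using hsg2[OF 5] by simp
    have Dk: "Dd (n-1) = 0" using 5 unfolding Dd_def by auto
    have p1: "cv AA CC (n-1) = h^(n-1) * ww (real n - 1)" using cAC[of "n-1"] n2 Dk unfolding rn by simp
    have p2: "cv CC AA (n-1) = h^(n-1) * ww (real n - 1)" using cCA[of "n-1"] n2 Dk unfolding rn by simp
    have c0: "CC (n-1) = h^(n-1) * PP (real n - 1)" using IC[of "n-1"] n2 Dk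
      unfolding C'_def gm_def rn by simp
    have a0: "AA n = h^n * (real n + 1)" using IA[of n] n2 unfolding A'_def al_def by simp
    have hp: "h^(n-1) = 2 * h^n" unfolding h_def using half_pow n2 by simp
    define X1 where "X1 = FX1 (real n - 1) (real n - 1 - 1) - 11/36 * s1 (real n - 1 - 1) + 1/16 * s1 (real n - 1 - 2)"
    define X2 where "X2 = FX2 (real n - 1) (real n - 1 - 1) - (-11/36 * (real n - 1) + 1/16 * (real n - 1 - 1))"
    define H1 where "H1 = FHC1 (real n) (real ((n-1) div 2))"
    define H2 where "H2 = FHC2 (real n) (real ((n-1) div 2))
      + (real n - 2)^2 * (-11/36) * real n + (real n - 4)^2 * (1/16) * (real n - 1)"
    define W where "W = ww (real n - 1)"
    define P1 where "P1 = PP (real n - 1)"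
    have pc: "real n ^ 2 * PP (real n) + (real n + 1) = 2*(3*P1 + 6*W + X1 + 2*X2) - (H1 + H2)"
      using polyC[OF n2] unfolding X1_def X2_def H1_def H2_def W_def P1_def by (simp add: add.assoc)
    have "real (n^2) * CC n + h^n * (real n + 1) =
        h^n * (2*(3*P1 + 6*W + X1 + 2*X2) - (H1 + H2))"
      using coeff2[OF n2] unfolding t1 t2 t3 h1 h2 p1 p2 c0 a0 hp
      unfolding X1_def[symmetric] X2_def[symmetric] H1_def[symmetric] H2_def[symmetric] W_def[symmetric] P1_def[symmetric]
      by (simp add: algebra_simps)
    also have "\<dots> = h^n * (real n ^ 2 * PP (real n) + (real n + 1))" unfolding pc ..
    finally have "real (n^2) * CC n = real (n^2) * (h^n * gm n)"
      using 5 by (simp add: gm_def Dd_def algebra_simps)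
    then show ?thesis using n2 unfolding h_def by simp
  qed
qed

theorem proposition11:
  shows "u1 1 = -1 \<and> u1 2 = -15/16 \<and>
         (\<forall>n\<ge>3. u1 n = - (61 / 12^2) * (real (n + 1))^2 / 2^n)"
proof (intro conjI allI impI)
  show "u1 1 = -1" using CC1 by (simp add: u1_def CC_def)
  show "u1 2 = -15/16" using CC2 by (simp add: u1_def CC_def)
  fix n :: nat assume n: "n \<ge> 3"
  have "u1 n = (1/2)^n * gm n" using Cf[of n] n by (simp add: u1_def CC_def)
  also have "gm n = PP (real n)" using n by (simp add: gm_def Dd_def)
  finally show "u1 n = - (61 / 12^2) * (real (n + 1))^2 / 2^n"
    by (simp add: PP_def power_one_over add.commute)
qed

end
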